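(* Assume (H), let $\mu_0$ be a probability measure on $\mathbb R^d$ with bounded support and $\eta\sim\mu_0$, $K:=\sup_\omega\|\eta(\omega)\|_2<\infty$. Then for every $t\in(0,T)$ and all $x,y\in\mathbb R^d$, $$\langle x-y,\,b^{\mu_0}_t(x)-b^{\mu_0}_t(y)\rangle\le\frac{\sigma_t'}{\sigma_t}\,\|x-y\|_2^2\Big[1-\frac{\beta_tK^2}{\sigma_t^2}\Big].$$
   Context: Fix $d\in\mathbb N$ and $T\in(0,\infty]$. Assumption (H): $\sigma:[0,T)\to(0,\infty)$ is continuous, strictly decreasing and differentiable with derivative $\sigma'_t$ bounded on $[0,t_0]$ for every $t_0<T$, $\sigma_0=1$, $\lim_{t\uparrow T}\sigma_t=0$; and $\beta_t:=1-\sigma_t$. $\Gamma_t(x,y):=\|x-\beta_ty\|_2^2/(2\sigma_t^2)$, $\mathcal D^{\mu_0}_t(x):=\mathbb E[\eta e^{-\Gamma_t(x,\eta)}]/\mathbb E[e^{-\Gamma_t(x,\eta)}]$ (expectation over $\eta\sim\mu_0$), and $b^{\mu_0}_t(x):=\frac{\sigma_t'}{\sigma_t}\big(x-\mathcal D^{\mu_0}_t(x)\big)$. *)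

theory Defs
  imports "HOL-Probability.Probability"
begin

definition time_dom :: "ereal \<Rightarrow> real set" where
  "time_dom T = {t. 0 \<le> t \<and> ereal t < T}"

definition to_T :: "ereal \<Rightarrow> real filter" where
  "to_T T = (case T of ereal r \<Rightarrow> at_left r | PInfty \<Rightarrow> at_top | MInfty \<Rightarrow> bot)"

definition hypH :: "(real \<Rightarrow> real) \<Rightarrow> (real \<Rightarrow> real) \<Rightarrow> ereal \<Rightarrow> bool" where
  "hypH \<sigma> \<sigma>' T \<longleftrightarrow>
     0 < T \<and>
     (\<forall>t\<in>time_dom T. 0 < \<sigma> t) \<and>
     continuous_on (time_dom T) \<sigma> \<and>
     (\<forall>s\<in>time_dom T. \<forall>t\<in>time_dom T. s < t \<longrightarrow> \<sigma> t < \<sigma> s) \<and>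
     (\<forall>t\<in>time_dom T. (\<sigma> has_real_derivative \<sigma>' t) (at t within time_dom T)) \<and>
     (\<forall>t0\<in>time_dom T. bounded (\<sigma>' ` {0..t0})) \<and>
     \<sigma> 0 = 1 \<and>
     (\<sigma> \<longlongrightarrow> 0) (to_T T)"

definition beta :: "(real \<Rightarrow> real) \<Rightarrow> real \<Rightarrow> real" where
  "beta \<sigma> t = 1 - \<sigma> t"

definition Gam :: "(real \<Rightarrow> real) \<Rightarrow> real \<Rightarrow> 'v::euclidean_space \<Rightarrow> 'v \<Rightarrow> real" where
  "Gam \<sigma> t x y = (norm (x - beta \<sigma> t *\<^sub>R y))\<^sup>2 / (2 * (\<sigma> t)\<^sup>2)"

definition Dmu :: "'a measure \<Rightarrow> ('a \<Rightarrow> 'v::euclidean_space) \<Rightarrow> (real \<Rightarrow> real) \<Rightarrow> real \<Rightarrow> 'v \<Rightarrow> 'v" where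
  "Dmu M \<eta> \<sigma> t x =
     (1 / (\<integral>\<omega>. exp (- Gam \<sigma> t x (\<eta> \<omega>)) \<partial>M)) *\<^sub>R
     (\<integral>\<omega>. exp (- Gam \<sigma> t x (\<eta> \<omega>)) *\<^sub>R \<eta> \<omega> \<partial>M)"

definition bmu :: "'a measure \<Rightarrow> ('a \<Rightarrow> 'v::euclidean_space) \<Rightarrow> (real \<Rightarrow> real) \<Rightarrow> (real \<Rightarrow> real) \<Rightarrow> real \<Rightarrow> 'v \<Rightarrow> 'v" where
  "bmu M \<eta> \<sigma> \<sigma>' t x = (\<sigma>' t / \<sigma> t) *\<^sub>R (x - Dmu M \<eta> \<sigma> t x)"

end

theory Submission
  imports Defs
begin

lemma g_nonneg: fixes e::real assumes "0 \<le> e" shows "exp e - 1 \<le> e/2 * (exp e + 1)"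
proof -
  let ?g = "\<lambda>e::real. e/2 * (exp e + 1) - (exp e - 1)"
  have d: "\<And>z. (?g has_real_derivative ((1 - exp z)/2 + z * exp z / 2)) (at z)"
    by (rule derivative_eq_intros refl | simp add: field_simps)+
  have "?g 0 \<le> ?g e"
  proof (rule DERIV_nonneg_imp_nondecreasing[OF assms])
    fix z assume "0 \<le> z" "z \<le> e"
    have "1 - z \<le> exp (-z)" using exp_ge_add_one_self[of "-z"] by simp
    hence "exp z * (1 - z) \<le> exp z * exp (-z)" by (simp add: mult_left_mono)
    hence "0 \<le> (1 - exp z)/2 + z * exp z / 2" by (simp add: exp_minus field_simps)
    thus "\<exists>y. (?g has_real_derivative y) (at z) \<and> 0 \<le> y" using d by blast
  qed
  thus ?thesis by simp
qed

lemma logmean: fixes d::real shows "d * (exp d - 1) \<le> d^2/2 * (exp d + 1)"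
proof (cases "0 \<le> d")
  case True
  from mult_left_mono[OF g_nonneg[OF True] True] show ?thesis by (simp add: power2_eq_square field_simps)
next
  case False
  hence e: "0 \<le> -d" by simp
  from mult_left_mono[OF g_nonneg[OF e] e]
  have "-d * (exp (-d) - 1) \<le> -d * (-d / 2 * (exp (-d) + 1))" .
  hence "exp d * (-d * (exp (-d) - 1)) \<le> exp d * (-d * (-d / 2 * (exp (-d) + 1)))"
    by (rule mult_left_mono) simp
  moreover have "exp d * exp (-d) = 1" by (simp add: exp_minus)
  moreover have "exp d * (-d * (exp (-d) - 1)) = d * (exp d - 1) - d * (exp d * exp (-d) - 1)"
    by (simp add: algebra_simps)
  moreover have "exp d * (-d * (-d / 2 * (exp (-d) + 1))) = d^2/2 * (exp d + 1) + d^2/2 * (exp d * exp (-d) - 1)"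
    by (simp add: power2_eq_square field_simps)
  ultimately show ?thesis by simp
qed

lemma lin6:
  fixes f1 f2 f3 f4 f5 f6 :: "'a \<Rightarrow> real"
  assumes "integrable M f1" "integrable M f2" "integrable M f3" "integrable M f4"
    "integrable M f5" "integrable M f6"
  shows "integrable M (\<lambda>\<omega>. c1*f1 \<omega> + c2*f2 \<omega> + c3*f3 \<omega> + c4*f4 \<omega> + c5*f5 \<omega> + c6*f6 \<omega>)"
    and "(\<integral>\<omega>. c1*f1 \<omega> + c2*f2 \<omega> + c3*f3 \<omega> + c4*f4 \<omega> + c5*f5 \<omega> + c6*f6 \<omega> \<partial>M)
       = c1*(\<integral>\<omega>. f1 \<omega> \<partial>M) + c2*(\<integral>\<omega>. f2 \<omega> \<partial>M) + c3*(\<integral>\<omega>. f3 \<omega> \<partial>M)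
       + c4*(\<integral>\<omega>. f4 \<omega> \<partial>M) + c5*(\<integral>\<omega>. f5 \<omega> \<partial>M) + c6*(\<integral>\<omega>. f6 \<omega> \<partial>M)"
  using assms by (simp_all add: integrable_add integral_add integrable_mult_right)

lemma alg: fixes x y q1 q2 \<delta> R :: real
  assumes h: "x - y \<le> \<delta>/2*(q2 - 2*x*y + q1)" and "q1 \<le> R^2" "q2 \<le> R^2" "\<bar>x\<bar> \<le> R" "\<bar>y\<bar> \<le> R" "0 \<le> \<delta>"
    and dR: "\<delta>*R \<le> 1"
  shows "(x-y)*(1-\<delta>*R) \<le> \<delta>*R^2"
proof -
  have sq: "0 \<le> (x+y)^2" by simp
  have e: "(x-y)^2 = x^2 - 2*x*y + y^2" by (simp add: power2_eq_square algebra_simps)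
  have "q2 - 2*x*y + q1 \<le> 2*R^2 + (x-y)^2"
    using assms(2,3) e zero_le_power2[of x] zero_le_power2[of y] by linarith
  hence "\<delta>/2*(q2 - 2*x*y + q1) \<le> \<delta>/2*(2*R^2 + (x-y)^2)" using assms(6) by (intro mult_left_mono) auto
  also have "\<dots> = \<delta>*R^2 + \<delta>/2*(x-y)^2" by (simp add: algebra_simps)
  finally have d: "x - y \<le> \<delta>*R^2 + \<delta>/2*(x-y)^2" using h by linarith
  show ?thesis
  proof (cases "x - y \<le> 0")
    case True
    have "0 \<le> 1-\<delta>*R" using dR by simp
    with True have "(x-y)*(1-\<delta>*R) \<le> 0" by (simp add: mult_nonpos_nonneg)
    also have "0 \<le> \<delta>*R^2" using assms(6) by simp
    finally show ?thesis .
  next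
    case False
    have "x - y \<le> 2*R" using assms(4,5) by linarith
    hence "(x-y)*(x-y) \<le> (2*R)*(x-y)" using False by (intro mult_right_mono) auto
    hence "(x-y)^2 \<le> 2*R*(x-y)" by (simp add: power2_eq_square)
    hence "\<delta>/2*(x-y)^2 \<le> \<delta>/2*(2*R*(x-y))" using assms(6) by (intro mult_left_mono) auto
    also have "\<dots> = \<delta>*R*(x-y)" by simp
    finally have "x - y \<le> \<delta>*R^2 + \<delta>*R*(x-y)" using d by linarith
    thus ?thesis by (simp add: algebra_simps)
  qed
qed

locale tilt =
  fixes M :: "'a measure" and u w :: "'a \<Rightarrow> real" and R W :: real
  assumes P: "prob_space M" and um: "u \<in> borel_measurable M" and wm: "w \<in> borel_measurable M"
    and ub: "\<And>\<omega>. \<omega> \<in> space M \<Longrightarrow> \<bar>u \<omega>\<bar> \<le> R"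
    and wpos: "\<And>\<omega>. \<omega> \<in> space M \<Longrightarrow> 0 < w \<omega>"
    and wb: "\<And>\<omega>. \<omega> \<in> space M \<Longrightarrow> w \<omega> \<le> W"
begin

definition "rho s \<omega> = exp (s * u \<omega>) * w \<omega>"
definition "Z s = (\<integral>\<omega>. rho s \<omega> \<partial>M)"
definition "N s = (\<integral>\<omega>. u \<omega> * rho s \<omega> \<partial>M)"
definition "Q s = (\<integral>\<omega>. (u \<omega>)^2 * rho s \<omega> \<partial>M)"
definition "f s = N s / Z s"

lemma int_pow: "integrable M (\<lambda>\<omega>. (u \<omega>)^k * rho s \<omega>)"
proof -
  interpret prob_space M by (rule P)
  show ?thesis
  proof (rule integrable_const_bound)
    show "AE \<omega> in M. norm ((u \<omega>)^k * rho s \<omega>) \<le> R^k * (exp (\<bar>s\<bar> * R) * W)"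
    proof (rule AE_I2)
      fix \<omega> assume om: "\<omega> \<in> space M"
      have A: "\<bar>u \<omega>\<bar>^k \<le> R^k" using ub[OF om] by (simp add: power_mono)
      have "s * u \<omega> \<le> \<bar>s * u \<omega>\<bar>" by simp
      also have "\<dots> = \<bar>s\<bar> * \<bar>u \<omega>\<bar>" by (simp add: abs_mult)
      also have "\<dots> \<le> \<bar>s\<bar> * R" using ub[OF om] by (intro mult_left_mono) auto
      finally have "s * u \<omega> \<le> \<bar>s\<bar> * R" .
      hence "exp (s * u \<omega>) \<le> exp (\<bar>s\<bar> * R)" by simp
      hence B: "exp (s * u \<omega>) * w \<omega> \<le> exp (\<bar>s\<bar> * R) * W"
        using wpos[OF om] wb[OF om] by (intro mult_mono) auto
      have C: "0 \<le> R^k" using A by (meson abs_ge_zero order_trans zero_le_power)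
      have D: "0 \<le> exp (s * u \<omega>) * w \<omega>" using wpos[OF om] by simp
      have "\<bar>u \<omega>\<bar>^k * (exp (s * u \<omega>) * w \<omega>) \<le> R^k * (exp (\<bar>s\<bar> * R) * W)"
        by (rule mult_mono[OF A B C D])
      thus "norm ((u \<omega>)^k * rho s \<omega>) \<le> R^k * (exp (\<bar>s\<bar> * R) * W)"
        using wpos[OF om] unfolding rho_def
        by (simp add: abs_mult power_abs)
    qed
    show "(\<lambda>\<omega>. (u \<omega>)^k * rho s \<omega>) \<in> borel_measurable M"
      unfolding rho_def using um wm by measurable
  qed
qed

lemma intZ: "integrable M (rho s)" using int_pow[of 0 s] by simp
lemma intN: "integrable M (\<lambda>\<omega>. u \<omega> * rho s \<omega>)" using int_pow[of 1 s] by simp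
lemma intQ: "integrable M (\<lambda>\<omega>. (u \<omega>)^2 * rho s \<omega>)" using int_pow[of 2 s] by simp

lemma rho_pos: "\<omega> \<in> space M \<Longrightarrow> 0 < rho s \<omega>"
  unfolding rho_def using wpos by simp

lemma Z_pos: "0 < Z s"
proof -
  interpret prob_space M by (rule P)
  have nn: "AE \<omega> in M. 0 \<le> rho s \<omega>" using rho_pos by (auto intro!: AE_I2 less_imp_le)
  have "Z s \<ge> 0" unfolding Z_def using nn by (rule integral_nonneg_AE)
  moreover have "Z s \<noteq> 0"
  proof
    assume "Z s = 0"
    hence "AE \<omega> in M. rho s \<omega> = 0" using integral_nonneg_eq_0_iff_AE[OF intZ nn] unfolding Z_def by simp
    hence "AE \<omega> in M. False" by (rule AE_mp) (auto intro!: AE_I2 dest: rho_pos[of _ s])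
    thus False by simp
  qed
  ultimately show ?thesis by simp
qed

lemma R_nonneg: "0 \<le> R"
proof -
  interpret prob_space M by (rule P)
  obtain \<omega> where "\<omega> \<in> space M" using not_empty by blast
  from ub[OF this] show ?thesis by simp
qed

lemma Q_le: "Q s \<le> R^2 * Z s"
proof -
  have "Q s \<le> (\<integral>\<omega>. R^2 * rho s \<omega> \<partial>M)" unfolding Q_def
  proof (rule integral_mono[OF intQ])
    show "integrable M (\<lambda>\<omega>. R^2 * rho s \<omega>)" using intZ by simp
    fix \<omega> assume om: "\<omega> \<in> space M"
    have "\<bar>u \<omega>\<bar>^2 \<le> R^2" using ub[OF om] by (intro power_mono) auto
    hence "(u \<omega>)^2 \<le> R^2" by simp
    thus "(u \<omega>)^2 * rho s \<omega> \<le> R^2 * rho s \<omega>" using rho_pos[OF om, of s] by (simp add: mult_right_mono)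
  qed
  thus ?thesis unfolding Z_def by simp
qed

lemma N_le: "\<bar>N s\<bar> \<le> R * Z s"
proof -
  have "N s \<le> (\<integral>\<omega>. R * rho s \<omega> \<partial>M)" unfolding N_def
  proof (rule integral_mono[OF intN])
    show "integrable M (\<lambda>\<omega>. R * rho s \<omega>)" using intZ by simp
    fix \<omega> assume om: "\<omega> \<in> space M"
    show "u \<omega> * rho s \<omega> \<le> R * rho s \<omega>" using ub[OF om] rho_pos[OF om, of s]
      by (intro mult_right_mono) auto
  qed
  moreover have "-N s \<le> (\<integral>\<omega>. R * rho s \<omega> \<partial>M)" unfolding N_def
  proof -
    have "(\<integral>\<omega>. - (u \<omega> * rho s \<omega>) \<partial>M) \<le> (\<integral>\<omega>. R * rho s \<omega> \<partial>M)"
    proof (rule integral_mono)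
      show "integrable M (\<lambda>\<omega>. R * rho s \<omega>)" using intZ by simp
      show "integrable M (\<lambda>\<omega>. - (u \<omega> * rho s \<omega>))" using intN by simp
      fix \<omega> assume om: "\<omega> \<in> space M"
      show "- (u \<omega> * rho s \<omega>) \<le> R * rho s \<omega>" using ub[OF om] rho_pos[OF om, of s]
        by (subst mult_minus_left[symmetric], intro mult_right_mono) auto
    qed
    thus "- (\<integral>\<omega>. u \<omega> * rho s \<omega> \<partial>M) \<le> (\<integral>\<omega>. R * rho s \<omega> \<partial>M)" by simp
  qed
  ultimately show ?thesis unfolding Z_def by simp
qed


lemma sym_nonpos:
  assumes om: "\<omega> \<in> space M" and om': "\<omega>' \<in> space M" and d: "0 \<le> \<delta>"
  shows "rho (s+\<delta>) \<omega> * rho s \<omega>' * ((u \<omega> - u \<omega>') * (1 - \<delta>/2*(u \<omega> - u \<omega>')))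
       + rho (s+\<delta>) \<omega>' * rho s \<omega> * ((u \<omega>' - u \<omega>) * (1 - \<delta>/2*(u \<omega>' - u \<omega>))) \<le> 0"
proof -
  define p where "p = u \<omega>"
  define q where "q = u \<omega>'"
  define c where "c = exp (s*p) * w \<omega> * exp (s*q) * w \<omega>'"
  have c0: "0 < c" unfolding c_def using wpos om om' by simp
  have r1: "rho (s+\<delta>) \<omega> * rho s \<omega>' = c * exp (\<delta>*p)"
    unfolding rho_def c_def p_def q_def by (simp add: distrib_right exp_add)
  have r2: "rho (s+\<delta>) \<omega>' * rho s \<omega> = c * exp (\<delta>*q)"
    unfolding rho_def c_def p_def q_def by (simp add: distrib_right exp_add)
  define Bk where "Bk = (p-q)*(exp (\<delta>*p) - exp (\<delta>*q)) - \<delta>/2*(p-q)^2*(exp (\<delta>*p) + exp (\<delta>*q))"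
  have eq: "rho (s+\<delta>) \<omega> * rho s \<omega>' * ((u \<omega> - u \<omega>') * (1 - \<delta>/2*(u \<omega> - u \<omega>')))
       + rho (s+\<delta>) \<omega>' * rho s \<omega> * ((u \<omega>' - u \<omega>) * (1 - \<delta>/2*(u \<omega>' - u \<omega>))) = c * Bk"
    unfolding r1 r2 Bk_def p_def[symmetric] q_def[symmetric]
    by (simp add: power2_eq_square field_simps)
  have "Bk \<le> 0"
  proof (cases "\<delta> = 0")
    case True thus ?thesis unfolding Bk_def by simp
  next
    case False
    hence dp: "0 < \<delta>" using d by simp
    define A where "A = exp (\<delta>*(p-q))"
    define Bq where "Bq = exp (\<delta>*q)"
    have Ep: "exp (\<delta>*p) = A * Bq" unfolding A_def Bq_def by (simp add: exp_add[symmetric] algebra_simps)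
    have L: "(\<delta>*(p-q)) * (A - 1) \<le> (\<delta>*(p-q))^2/2 * (A + 1)"
      unfolding A_def by (rule logmean)
    have L2: "Bq * ((\<delta>*(p-q)) * (A - 1)) \<le> Bq * ((\<delta>*(p-q))^2/2 * (A + 1))"
      by (rule mult_left_mono[OF L]) (simp add: Bq_def)
    have i1: "Bq * ((\<delta>*(p-q)) * (A - 1)) = \<delta> * ((p-q)*(A*Bq - Bq))" by (simp add: algebra_simps)
    have i2: "Bq * ((\<delta>*(p-q))^2/2 * (A + 1)) = \<delta> * (\<delta>/2*(p-q)^2*(A*Bq + Bq))"
      by (simp add: field_simps power2_eq_square)
    have "\<delta> * ((p-q)*(exp (\<delta>*p) - exp (\<delta>*q))) \<le> \<delta> * (\<delta>/2*(p-q)^2*(exp (\<delta>*p) + exp (\<delta>*q)))"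
      using L2 unfolding i1 i2 Ep Bq_def[symmetric] .
    hence "(p-q)*(exp (\<delta>*p) - exp (\<delta>*q)) \<le> \<delta>/2*(p-q)^2*(exp (\<delta>*p) + exp (\<delta>*q))"
      using dp mult_le_cancel_left_pos[OF dp] by (metis mult.assoc)
    thus ?thesis unfolding Bk_def by simp
  qed
  with c0 eq show ?thesis by (simp add: mult_nonneg_nonpos)
qed


lemma key_ineq:
  assumes d: "0 \<le> \<delta>"
  shows "2*(N (s+\<delta>) * Z s - N s * Z (s+\<delta>)) \<le> \<delta>*(Q (s+\<delta>) * Z s - 2 * N s * N (s+\<delta>) + Z (s+\<delta>) * Q s)"
proof -
  define F where "F \<omega> = (-N s - \<delta>/2*Q s)*rho (s+\<delta>) \<omega> + (Z s + \<delta>*N s)*(u \<omega>*rho (s+\<delta>) \<omega>)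
     + (-\<delta>/2*Z s)*((u \<omega>)^2*rho (s+\<delta>) \<omega>) + (N (s+\<delta>) - \<delta>/2*Q (s+\<delta>))*rho s \<omega>
     + (-Z (s+\<delta>) + \<delta>*N (s+\<delta>))*(u \<omega>*rho s \<omega>) + (-\<delta>/2*Z (s+\<delta>))*((u \<omega>)^2*rho s \<omega>)" for \<omega>
  have Fle: "F \<omega> \<le> 0" if om: "\<omega> \<in> space M" for \<omega>
  proof -
    define p where "p = u \<omega>"
    have "F \<omega> = (\<integral>\<omega>'. (rho (s+\<delta>) \<omega>*(p - \<delta>/2*p^2))*rho s \<omega>' + (rho (s+\<delta>) \<omega>*(-1+\<delta>*p))*(u \<omega>'*rho s \<omega>')
        + (-\<delta>/2*rho (s+\<delta>) \<omega>)*((u \<omega>')^2*rho s \<omega>') + (rho s \<omega>*(-p - \<delta>/2*p^2))*rho (s+\<delta>) \<omega>'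
        + (rho s \<omega>*(1+\<delta>*p))*(u \<omega>'*rho (s+\<delta>) \<omega>') + (-\<delta>/2*rho s \<omega>)*((u \<omega>')^2*rho (s+\<delta>) \<omega>') \<partial>M)"
      unfolding lin6(2)[OF intZ intN intQ intZ intN intQ]
      unfolding F_def p_def Z_def[symmetric] N_def[symmetric] Q_def[symmetric]
      by (simp add: field_simps power2_eq_square)
    also have "\<dots> \<le> (\<integral>\<omega>'. 0 \<partial>M)"
    proof (rule integral_mono)
      show "integrable M (\<lambda>\<omega>'. (rho (s+\<delta>) \<omega>*(p - \<delta>/2*p^2))*rho s \<omega>' + (rho (s+\<delta>) \<omega>*(-1+\<delta>*p))*(u \<omega>'*rho s \<omega>')
        + (-\<delta>/2*rho (s+\<delta>) \<omega>)*((u \<omega>')^2*rho s \<omega>') + (rho s \<omega>*(-p - \<delta>/2*p^2))*rho (s+\<delta>) \<omega>'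
        + (rho s \<omega>*(1+\<delta>*p))*(u \<omega>'*rho (s+\<delta>) \<omega>') + (-\<delta>/2*rho s \<omega>)*((u \<omega>')^2*rho (s+\<delta>) \<omega>'))"
        by (rule lin6(1)[OF intZ intN intQ intZ intN intQ])
      show "integrable M (\<lambda>\<omega>'. 0::real)" by simp
      fix \<omega>' assume om': "\<omega>' \<in> space M"
      have "(rho (s+\<delta>) \<omega>*(p - \<delta>/2*p^2))*rho s \<omega>' + (rho (s+\<delta>) \<omega>*(-1+\<delta>*p))*(u \<omega>'*rho s \<omega>')
        + (-\<delta>/2*rho (s+\<delta>) \<omega>)*((u \<omega>')^2*rho s \<omega>') + (rho s \<omega>*(-p - \<delta>/2*p^2))*rho (s+\<delta>) \<omega>'
        + (rho s \<omega>*(1+\<delta>*p))*(u \<omega>'*rho (s+\<delta>) \<omega>') + (-\<delta>/2*rho s \<omega>)*((u \<omega>')^2*rho (s+\<delta>) \<omega>')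
        = rho (s+\<delta>) \<omega> * rho s \<omega>' * ((u \<omega> - u \<omega>') * (1 - \<delta>/2*(u \<omega> - u \<omega>')))
       + rho (s+\<delta>) \<omega>' * rho s \<omega> * ((u \<omega>' - u \<omega>) * (1 - \<delta>/2*(u \<omega>' - u \<omega>)))"
        unfolding p_def by (simp add: field_simps power2_eq_square)
      also have "\<dots> \<le> 0" by (rule sym_nonpos[OF om om' d])
      finally show "(rho (s+\<delta>) \<omega>*(p - \<delta>/2*p^2))*rho s \<omega>' + (rho (s+\<delta>) \<omega>*(-1+\<delta>*p))*(u \<omega>'*rho s \<omega>')
        + (-\<delta>/2*rho (s+\<delta>) \<omega>)*((u \<omega>')^2*rho s \<omega>') + (rho s \<omega>*(-p - \<delta>/2*p^2))*rho (s+\<delta>) \<omega>'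
        + (rho s \<omega>*(1+\<delta>*p))*(u \<omega>'*rho (s+\<delta>) \<omega>') + (-\<delta>/2*rho s \<omega>)*((u \<omega>')^2*rho (s+\<delta>) \<omega>') \<le> 0" .
    qed
    finally show ?thesis by simp
  qed
  have "(\<integral>\<omega>. F \<omega> \<partial>M) \<le> (\<integral>\<omega>. 0 \<partial>M)"
  proof (rule integral_mono)
    show "integrable M F" unfolding F_def by (rule lin6(1)[OF intZ intN intQ intZ intN intQ])
  qed (use Fle in auto)
  moreover have "(\<integral>\<omega>. F \<omega> \<partial>M) = (-N s - \<delta>/2*Q s)*Z (s+\<delta>) + (Z s + \<delta>*N s)*N (s+\<delta>)
     + (-\<delta>/2*Z s)*Q (s+\<delta>) + (N (s+\<delta>) - \<delta>/2*Q (s+\<delta>))*Z s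
     + (-Z (s+\<delta>) + \<delta>*N (s+\<delta>))*N s + (-\<delta>/2*Z (s+\<delta>))*Q s"
    unfolding F_def lin6(2)[OF intZ intN intQ intZ intN intQ]
    unfolding Z_def[symmetric] N_def[symmetric] Q_def[symmetric] by (simp add: Z_def)
  ultimately show ?thesis by (simp add: field_simps)
qed


lemma f_step:
  assumes d: "0 \<le> \<delta>" and dR: "\<delta>*R \<le> 1"
  shows "(f (s+\<delta>) - f s)*(1-\<delta>*R) \<le> \<delta>*R^2"
proof (rule alg[OF _ _ _ _ _ d dR])
  have z1: "0 < Z s" and z2: "0 < Z (s+\<delta>)" by (rule Z_pos)+
  have k: "2*(N (s+\<delta>) * Z s - N s * Z (s+\<delta>)) \<le> \<delta>*(Q (s+\<delta>) * Z s - 2 * N s * N (s+\<delta>) + Z (s+\<delta>) * Q s)"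
    by (rule key_ineq[OF d])
  have "f (s+\<delta>) - f s = 2*(N (s+\<delta>) * Z s - N s * Z (s+\<delta>)) / (2 * Z s * Z (s+\<delta>))"
    unfolding f_def using z1 z2 by (simp add: field_simps)
  also have "\<dots> \<le> \<delta>*(Q (s+\<delta>) * Z s - 2 * N s * N (s+\<delta>) + Z (s+\<delta>) * Q s) / (2 * Z s * Z (s+\<delta>))"
    using z1 z2 k by (intro divide_right_mono) auto
  also have "\<dots> = \<delta>/2*(Q (s+\<delta>)/Z (s+\<delta>) - 2*f (s+\<delta>)*f s + Q s/Z s)"
    unfolding f_def using z1 z2 by (simp add: field_simps)
  finally show "f (s+\<delta>) - f s \<le> \<delta>/2*(Q (s+\<delta>)/Z (s+\<delta>) - 2*f (s+\<delta>)*f s + Q s/Z s)" .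
  show "Q s / Z s \<le> R^2" unfolding pos_divide_le_eq[OF Z_pos]
    using Q_le[of s] by (simp add: mult.commute)
  show "Q (s+\<delta>) / Z (s+\<delta>) \<le> R^2" unfolding pos_divide_le_eq[OF Z_pos]
    using Q_le[of "s+\<delta>"] by (simp add: mult.commute)
  show "\<bar>f s\<bar> \<le> R" unfolding f_def abs_divide abs_of_pos[OF Z_pos] pos_divide_le_eq[OF Z_pos]
    using N_le[of s] by (simp add: mult.commute)
  show "\<bar>f (s+\<delta>)\<bar> \<le> R" unfolding f_def abs_divide abs_of_pos[OF Z_pos] pos_divide_le_eq[OF Z_pos]
    using N_le[of "s+\<delta>"] by (simp add: mult.commute)
qed

lemma f_total:
  assumes a: "0 \<le> a"
  shows "f a - f 0 \<le> a * R^2"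
proof -
  have bound: "(f a - f 0) * (1 - a*R/n) \<le> a*R^2" if n: "a*R < real n" for n :: nat
  proof -
    have n0: "0 < real n" using n a R_nonneg by (meson mult_nonneg_nonneg le_less_trans)
    define \<delta> where "\<delta> = a / n"
    have d: "0 \<le> \<delta>" unfolding \<delta>_def using a n0 by simp
    have dR: "\<delta>*R \<le> 1" unfolding \<delta>_def using n n0 by (simp add: field_simps)
    have "(f a - f 0) * (1 - \<delta>*R) = (\<Sum>i<n. (f (\<delta>*real (Suc i)) - f (\<delta>*real i)) * (1 - \<delta>*R))"
      unfolding sum_distrib_right[symmetric] sum_lessThan_telescope[of "\<lambda>i. f (\<delta>*real i)"]
      unfolding \<delta>_def using n0 by simp
    also have "\<dots> \<le> (\<Sum>i<n. \<delta>*R^2)"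
    proof (rule sum_mono)
      fix i assume "i \<in> {..<n}"
      have "\<delta>*real (Suc i) = \<delta>*real i + \<delta>" by (simp add: algebra_simps)
      thus "(f (\<delta>*real (Suc i)) - f (\<delta>*real i)) * (1 - \<delta>*R) \<le> \<delta>*R^2"
        using f_step[OF d dR, of "\<delta>*real i"] by simp
    qed
    also have "\<dots> = a*R^2" unfolding \<delta>_def using n0 by simp
    finally show ?thesis unfolding \<delta>_def by (simp add: field_simps)
  qed
  show ?thesis
  proof (rule ccontr)
    assume "\<not> ?thesis"
    hence gt: "a*R^2 < f a - f 0" by simp
    define D where "D = f a - f 0"
    have D0: "0 < D" using gt a unfolding D_def by (smt (verit) mult_nonneg_nonneg zero_le_power2)
    obtain n :: nat where n: "max (a*R) (D*a*R/(D - a*R^2)) < real n" using reals_Archimedean2 by blast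
    have n1: "a*R < real n" using n by simp
    have n0: "0 < real n" using n1 a R_nonneg by (meson mult_nonneg_nonneg le_less_trans)
    have "D*a*R/(D - a*R^2) < real n" using n by simp
    hence "D*a*R < real n * (D - a*R^2)" using gt unfolding D_def by (simp add: divide_less_eq)
    moreover have "D * (1 - a*R/n) \<le> a*R^2" using bound[OF n1] unfolding D_def .
    hence "D * real n - D*a*R \<le> a*R^2 * real n" using n0 by (simp add: field_simps)
    ultimately show False by (simp add: algebra_simps)
  qed
qed

end

lemma sigma_facts:
  fixes \<sigma> \<sigma>' :: "real \<Rightarrow> real" and T :: ereal and t :: real
  assumes H: "hypH \<sigma> \<sigma>' T" and t: "0 < t" "ereal t < T"
  shows "\<sigma>' t \<le> 0" "0 < \<sigma> t" "\<sigma> t < 1"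
proof -
  have tD: "t \<in> time_dom T" using t unfolding time_dom_def by simp
  have zD: "0 \<in> time_dom T" using t unfolding time_dom_def by (simp add: le_less_trans[of _ "ereal t"] less_imp_le)
  have dec: "\<And>a b. a \<in> time_dom T \<Longrightarrow> b \<in> time_dom T \<Longrightarrow> a < b \<Longrightarrow> \<sigma> b < \<sigma> a"
    using H unfolding hypH_def by blast
  show "0 < \<sigma> t" using H tD unfolding hypH_def by blast
  show "\<sigma> t < 1" using dec[OF zD tD t(1)] H unfolding hypH_def by simp
  have der: "(\<sigma> has_real_derivative \<sigma>' t) (at t within time_dom T)"
    using H tD unfolding hypH_def by blast
  obtain r where r: "ereal t < ereal r" "ereal r < T" using ereal_dense2[OF t(2)] by blast
  have "at t within time_dom T = at t"
  proof (rule at_within_open_subset)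
    show "t \<in> {0<..<r}" using t r by simp
    show "{0<..<r} \<subseteq> time_dom T" using r unfolding time_dom_def
      by (auto intro: less_trans[of _ "ereal r"])
  qed simp
  with der have der': "(\<sigma> has_real_derivative \<sigma>' t) (at t)" by simp
  show "\<sigma>' t \<le> 0"
  proof (rule ccontr)
    assume "\<not> ?thesis"
    then obtain d where d: "d > 0" "\<forall>h>0. h < d \<longrightarrow> \<sigma> (t - h) < \<sigma> t"
      using DERIV_pos_inc_left[OF der'] by force
    define h where "h = min (d/2) t"
    have h: "0 < h" "h < d" "h \<le> t" using d t unfolding h_def by auto
    have "t - h \<in> time_dom T" using tD h unfolding time_dom_def
      by (auto intro: le_less_trans[of _ "ereal t"])
    from dec[OF this tD] h d show False by force
  qed
qed

theorem lemma2p7: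
  fixes \<sigma> \<sigma>' :: "real \<Rightarrow> real" and T :: ereal
    and M :: "'a measure" and \<eta> :: "'a \<Rightarrow> 'v::euclidean_space"
    and t :: real and x y :: 'v
  assumes H: "hypH \<sigma> \<sigma>' T"
    and P: "prob_space M"
    and meas: "\<eta> \<in> borel_measurable M"
    and bdd: "bounded (\<eta> ` space M)"
    and t: "0 < t" "ereal t < T"
  defines "K \<equiv> (SUP \<omega>\<in>space M. norm (\<eta> \<omega>))"
  shows "inner (x - y) (bmu M \<eta> \<sigma> \<sigma>' t x - bmu M \<eta> \<sigma> \<sigma>' t y)
         \<le> (\<sigma>' t / \<sigma> t) * (norm (x - y))\<^sup>2 * (1 - beta \<sigma> t * K\<^sup>2 / (\<sigma> t)\<^sup>2)"
proof -
  note sf = sigma_facts[OF H t]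
  interpret prob_space M by (rule P)
  define v where "v = x - y"
  define c where "c = \<sigma>' t / \<sigma> t"
  have c0: "c \<le> 0" unfolding c_def using sf by (simp add: divide_nonpos_pos)
  define a where "a = beta \<sigma> t / (\<sigma> t)^2"
  have a0: "0 \<le> a" unfolding a_def beta_def using sf by simp
  obtain B where B: "\<And>z. z \<in> \<eta> ` space M \<Longrightarrow> norm z \<le> B" using bdd unfolding bounded_iff by blast
  have bddA: "bdd_above ((\<lambda>\<omega>. norm (\<eta> \<omega>)) ` space M)"
    using B by (intro bdd_aboveI2[of _ _ B]) auto
  have Kb: "norm (\<eta> \<omega>) \<le> K" if "\<omega> \<in> space M" for \<omega>
    unfolding K_def using bddA that by (rule cSUP_upper2) simp
  define u where "u \<omega> = inner v (\<eta> \<omega>)" for \<omega>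
  define w where "w \<omega> = exp (- Gam \<sigma> t y (\<eta> \<omega>))" for \<omega>
  have Gam0: "0 \<le> Gam \<sigma> t z e" for z e :: 'v unfolding Gam_def by simp
  have um: "u \<in> borel_measurable M" unfolding u_def using meas by measurable
  have wm: "w \<in> borel_measurable M" unfolding w_def Gam_def using meas by measurable
  have ub: "\<bar>u \<omega>\<bar> \<le> norm v * K" if om: "\<omega> \<in> space M" for \<omega>
  proof -
    have "\<bar>u \<omega>\<bar> \<le> norm v * norm (\<eta> \<omega>)" unfolding u_def by (rule Cauchy_Schwarz_ineq2)
    also have "\<dots> \<le> norm v * K" using Kb[OF om] by (intro mult_left_mono) auto
    finally show ?thesis .
  qed
  have wpos: "0 < w \<omega>" for \<omega> unfolding w_def by simp
  have wb: "w \<omega> \<le> 1" for \<omega> unfolding w_def using Gam0 by simp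
  interpret tl: tilt M u w "norm v * K" 1
    by (rule tilt.intro[OF P um wm ub wpos wb])
  define C where "C = exp (- (2 * inner v y + (norm v)^2) / (2 * (\<sigma> t)^2))"
  have C0: "0 < C" unfolding C_def by simp
  have rel: "exp (- Gam \<sigma> t x (\<eta> \<omega>)) = C * tl.rho a \<omega>" for \<omega>
  proof -
    define e where "e = \<eta> \<omega>"
    define b where "b = beta \<sigma> t"
    have xv: "x = y + v" unfolding v_def by simp
    have n: "(norm (x - b *\<^sub>R e))^2 = (norm (y - b *\<^sub>R e))^2 + (2 * inner v y + (norm v)^2) - 2 * b * inner v e"
      unfolding xv power2_norm_eq_inner by (simp add: inner_simps inner_commute algebra_simps)
    have s0: "(\<sigma> t)^2 > 0" using sf by simp
    have "- Gam \<sigma> t x e = - (2 * inner v y + (norm v)^2) / (2 * (\<sigma> t)^2) + (a * u \<omega> + - Gam \<sigma> t y e)"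
      unfolding Gam_def b_def[symmetric] n a_def u_def e_def[symmetric] using s0
      by (simp add: field_simps b_def)
    thus ?thesis unfolding tl.rho_def w_def C_def e_def by (simp add: exp_add[symmetric])
  qed
  have rel0: "tl.rho 0 \<omega> = w \<omega>" for \<omega> unfolding tl.rho_def by simp
  have intv: "integrable M (\<lambda>\<omega>. exp (- Gam \<sigma> t z (\<eta> \<omega>)) *\<^sub>R \<eta> \<omega>)" for z
  proof (rule integrable_const_bound)
    show "AE \<omega> in M. norm (exp (- Gam \<sigma> t z (\<eta> \<omega>)) *\<^sub>R \<eta> \<omega>) \<le> K"
    proof (rule AE_I2)
      fix \<omega> assume om: "\<omega> \<in> space M"
      have "exp (- Gam \<sigma> t z (\<eta> \<omega>)) \<le> 1" using Gam0 by simp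
      hence "exp (- Gam \<sigma> t z (\<eta> \<omega>)) * norm (\<eta> \<omega>) \<le> 1 * K"
        using Kb[OF om] by (intro mult_mono) auto
      thus "norm (exp (- Gam \<sigma> t z (\<eta> \<omega>)) *\<^sub>R \<eta> \<omega>) \<le> K" by simp
    qed
    show "(\<lambda>\<omega>. exp (- Gam \<sigma> t z (\<eta> \<omega>)) *\<^sub>R \<eta> \<omega>) \<in> borel_measurable M"
      unfolding Gam_def using meas by measurable
  qed
  have innD: "inner v (Dmu M \<eta> \<sigma> t z) = (\<integral>\<omega>. exp (- Gam \<sigma> t z (\<eta> \<omega>)) * u \<omega> \<partial>M) / (\<integral>\<omega>. exp (- Gam \<sigma> t z (\<eta> \<omega>)) \<partial>M)" for z
    unfolding Dmu_def inner_scaleR_right integral_inner_right[OF intv, symmetric]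
    by (simp add: u_def)
  have Dx: "inner v (Dmu M \<eta> \<sigma> t x) = tl.f a"
    unfolding innD rel tl.f_def tl.N_def tl.Z_def using C0
    by (simp add: mult.commute mult.left_commute)
  have Dy: "inner v (Dmu M \<eta> \<sigma> t y) = tl.f 0"
    unfolding innD tl.f_def tl.N_def tl.Z_def rel0 by (simp add: w_def mult.commute)
  have diff: "tl.f a - tl.f 0 \<le> a * (norm v * K)^2" by (rule tl.f_total[OF a0])
  have "inner (x - y) (bmu M \<eta> \<sigma> \<sigma>' t x - bmu M \<eta> \<sigma> \<sigma>' t y)
      = c * ((norm v)^2 - (inner v (Dmu M \<eta> \<sigma> t x) - inner v (Dmu M \<eta> \<sigma> t y)))"
    unfolding bmu_def c_def[symmetric] v_def[symmetric] inner_diff_right inner_scaleR_right power2_norm_eq_inner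
    by (simp add: v_def inner_diff_right algebra_simps)
  also have "\<dots> \<le> c * ((norm v)^2 - a * (norm v * K)^2)"
    unfolding Dx Dy using diff c0 by (intro mult_left_mono_neg) auto
  also have "\<dots> = (\<sigma>' t / \<sigma> t) * (norm (x - y))\<^sup>2 * (1 - beta \<sigma> t * K\<^sup>2 / (\<sigma> t)\<^sup>2)"
    unfolding c_def a_def v_def by (simp add: algebra_simps power_mult_distrib)
  finally show ?thesis .
qed

end
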